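(* Let $\mathscr{A}$ be a quiver over $\Lambda$ and $R$ a set of relations on paths in $\mathscr{A}$, and $\mathscr{C}=\langle\mathscr{A}\mid R\rangle^+$. Assume: (i) every relation in $R$ has the form $a|v\sim b|w$ with $a,b,v,w\in\mathscr{A}$, and every path of length $2$ appears in at most one relation; (ii) for all $a\neq b$ in $\mathscr{A}$ with $\mathfrak{s}(a)=\mathfrak{s}(b)$ there is a unique relation in $R$ of the form $a|v\sim b|w$; (ii') for all $a\neq b$ in $\mathscr{A}$ with $\mathfrak{t}(a)=\mathfrak{t}(b)$ there is a unique relation in $R$ of the form $v|a\sim w|b$; (iii) for every $a\in\mathscr{A}$ there is a unique $z_a\in\mathscr{A}(\mathfrak{t}(a),\Lambda)$ such that: (a) for every $v\in\mathscr{A}(\mathfrak{t}(a),\Lambda)\setminus\{z_a\}$ there are $b\in\mathscr{A}(\mathfrak{s}(a),\Lambda)\setminus\{a\}$ and $w\in\mathscr{A}$ with $(a|v\sim b|w)\in R$; (b) if $(a|z_a\sim b|w)\in R$ then $b=a$ and $w=z_a$; (iii') for every $a\in\mathscr{A}$ there is a unique $z^a\in\mathscr{A}(\Lambda,\mathfrak{s}(a))$ such that: (a) for every $v\in\mathscr{A}(\Lambda,\mathfrak{s}(a))\setminus\{z^a\}$ there are $b\in\mathscr{A}(\Lambda,\mathfrak{t}(a))\setminus\{a\}$ and $w\in\mathscr{A}$ with $(v|a\sim w|b)\in R$; (b) if $(z^a|a\sim w|b)\in R$ then $b=a$ and $w=z^a$; (v) writing, for $a\neq b$ with $\mathfrak{s}(a)=\mathfrak{s}(b)$,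 $a\star b$ for the unique $v$ such that $(a|v\sim b|w)\in R$ for some $w$, one has $(a\star b)\star(a\star c)=(b\star a)\star(b\star c)$ for all pairwise distinct $a,b,c\in\mathscr{A}$ with a common source. Define $a\star' b:=a\star b$ if $a\neq b$ and $a\star' a:=z_a$ (for $\mathfrak{s}(a)=\mathfrak{s}(b)$); then each $a\star'\cdot\colon\mathscr{A}(\mathfrak{s}(a),\Lambda)\to\mathscr{A}(\mathfrak{t}(a),\Lambda)$ is a bijection. Define, for composable $a|b$, $a\rightharpoonup b:=c$ where $c$ is the unique element with $b=a\star' c$, and $a\leftharpoonup b:=(a\rightharpoonup b)\star' a$. Then $\sigma\colon\mathscr{A}\otimes\mathscr{A}\to\mathscr{A}\otimes\mathscr{A}$, $\sigma(a|b)=(a\rightharpoonup b)|(a\leftharpoonup b)$, is an involutive non-degenerate quiver-theoretic Yang--Baxter map on $\mathscr{A}$ whose structure category is $\mathscr{C}$.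
   Context: A quiver over $\Lambda$ has source/target maps $\mathfrak{s},\mathfrak{t}$; $\mathscr{A}(\lambda,\Lambda)$ (resp. $\mathscr{A}(\Lambda,\mu)$) denotes arrows with source $\lambda$ (resp. target $\mu$). $\langle\mathscr{A}\mid R\rangle^+$ is the category presented by generators $\mathscr{A}$ and relations $R$: the path category of $\mathscr{A}$ (paths $x_1|\dots|x_n$ with $\mathfrak{t}(x_i)=\mathfrak{s}(x_{i+1})$, composed by concatenation) modulo the congruence generated by $R$. A relation $u\sim v$ is regarded as the same as $v\sim u$. $\mathscr{A}\otimes\mathscr{A}$ is the quiver of composable pairs $a|b$. A quiver-theoretic Yang--Baxter map is a source/target-preserving map $\sigma$ on $\mathscr{A}\otimes\mathscr{A}$ with $(\sigma\otimes\mathrm{id})(\mathrm{id}\otimes\sigma)(\sigma\otimes\mathrm{id})=(\mathrm{id}\otimes\sigma)(\sigma\otimes\mathrm{id})(\mathrm{id}\otimes\sigma)$; involutive: $\sigma^2=\mathrm{id}$; non-degenerate: all maps $x\rightharpoonup\cdot\colon\mathscr{A}(\mathfrak{t}(x),\Lambda)\to\mathscr{A}(\mathfrak{s}(x),\Lambda)$ and $\cdot\leftharpoonup y\colon\mathscr{A}(\Lambda,\mathfrak{s}(y))\to\mathscr{A}(\Lambda,\mathfrak{t}(y))$ are bijective. Its structure category is the category presented by generators $\mathscr{A}$ and relations $x|y\sim(x\rightharpoonup y)|(x\leftharpoonup y)$. *)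

theory Defs
  imports Main
begin

text \<open>Paths are lists of arrows
  x1|...|xn with t xi = s x(i+1); the empty list stands for identity paths.
  A set of relations R is a set of pairs (u,v) of paths, read as u ~ v;
  u ~ v is identified with v ~ u.\<close>

definition is_path :: "'a set \<Rightarrow> ('a \<Rightarrow> 'v) \<Rightarrow> ('a \<Rightarrow> 'v) \<Rightarrow> 'a list \<Rightarrow> bool" where
  "is_path A s t p \<longleftrightarrow> set p \<subseteq> A \<and> (\<forall>i. Suc i < length p \<longrightarrow> t (p ! i) = s (p ! Suc i))"

definition relations_on_paths ::
  "'a set \<Rightarrow> ('a \<Rightarrow> 'v) \<Rightarrow> ('a \<Rightarrow> 'v) \<Rightarrow> ('a list \<times> 'a list) set \<Rightarrow> bool" where
  "relations_on_paths A s t R \<longleftrightarrow>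
     (\<forall>(p, q) \<in> R. is_path A s t p \<and> is_path A s t q \<and> p \<noteq> [] \<and> q \<noteq> [] \<and>
        s (hd p) = s (hd q) \<and> t (last p) = t (last q))"

definition rel :: "('a list \<times> 'a list) set \<Rightarrow> 'a list \<Rightarrow> 'a list \<Rightarrow> bool" where
  "rel R u v \<longleftrightarrow> (u, v) \<in> R \<or> (v, u) \<in> R"

text \<open>The presented category \<langle>A | R\<rangle>^+ is the path category modulo this congruence.\<close>
inductive pcong :: "'a set \<Rightarrow> ('a \<Rightarrow> 'v) \<Rightarrow> ('a \<Rightarrow> 'v) \<Rightarrow> ('a list \<times> 'a list) set
    \<Rightarrow> 'a list \<Rightarrow> 'a list \<Rightarrow> bool"
  for A s t R where
  base: "(p, q) \<in> R \<Longrightarrow> pcong A s t R p q"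
| refl: "is_path A s t p \<Longrightarrow> pcong A s t R p p"
| sym: "pcong A s t R p q \<Longrightarrow> pcong A s t R q p"
| trans: "pcong A s t R p q \<Longrightarrow> pcong A s t R q r \<Longrightarrow> pcong A s t R p r"
| ctxt: "pcong A s t R p q \<Longrightarrow> is_path A s t (u @ p @ v) \<Longrightarrow> is_path A s t (u @ q @ v)
         \<Longrightarrow> pcong A s t R (u @ p @ v) (u @ q @ v)"

definition star :: "('a list \<times> 'a list) set \<Rightarrow> 'a \<Rightarrow> 'a \<Rightarrow> 'a" where
  "star R a b = fst (THE vw. rel R [a, fst vw] [b, snd vw])"

definition zpred :: "'a set \<Rightarrow> ('a \<Rightarrow> 'v) \<Rightarrow> ('a \<Rightarrow> 'v) \<Rightarrow> ('a list \<times> 'a list) set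
    \<Rightarrow> 'a \<Rightarrow> 'a \<Rightarrow> bool" where
  "zpred A s t R a z \<longleftrightarrow> z \<in> A \<and> s z = t a \<and>
     (\<forall>v \<in> A. s v = t a \<and> v \<noteq> z \<longrightarrow>
        (\<exists>b \<in> A. s b = s a \<and> b \<noteq> a \<and> (\<exists>w \<in> A. rel R [a, v] [b, w]))) \<and>
     (\<forall>b w. rel R [a, z] [b, w] \<longrightarrow> b = a \<and> w = z)"

definition zpred' :: "'a set \<Rightarrow> ('a \<Rightarrow> 'v) \<Rightarrow> ('a \<Rightarrow> 'v) \<Rightarrow> ('a list \<times> 'a list) set
    \<Rightarrow> 'a \<Rightarrow> 'a \<Rightarrow> bool" where
  "zpred' A s t R a z \<longleftrightarrow> z \<in> A \<and> t z = s a \<and>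
     (\<forall>v \<in> A. t v = s a \<and> v \<noteq> z \<longrightarrow>
        (\<exists>b \<in> A. t b = t a \<and> b \<noteq> a \<and> (\<exists>w \<in> A. rel R [v, a] [w, b]))) \<and>
     (\<forall>b w. rel R [z, a] [w, b] \<longrightarrow> b = a \<and> w = z)"

definition zeta :: "'a set \<Rightarrow> ('a \<Rightarrow> 'v) \<Rightarrow> ('a \<Rightarrow> 'v) \<Rightarrow> ('a list \<times> 'a list) set \<Rightarrow> 'a \<Rightarrow> 'a" where
  "zeta A s t R a = (THE z. zpred A s t R a z)"

definition star' :: "'a set \<Rightarrow> ('a \<Rightarrow> 'v) \<Rightarrow> ('a \<Rightarrow> 'v) \<Rightarrow> ('a list \<times> 'a list) set \<Rightarrow> 'a \<Rightarrow> 'a \<Rightarrow> 'a" where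
  "star' A s t R a b = (if a = b then zeta A s t R a else star R a b)"

definition out_arrows :: "'a set \<Rightarrow> ('a \<Rightarrow> 'v) \<Rightarrow> 'v \<Rightarrow> 'a set" where
  "out_arrows A s x = {a \<in> A. s a = x}"

definition in_arrows :: "'a set \<Rightarrow> ('a \<Rightarrow> 'v) \<Rightarrow> 'v \<Rightarrow> 'a set" where
  "in_arrows A t x = {a \<in> A. t a = x}"

definition rharp :: "'a set \<Rightarrow> ('a \<Rightarrow> 'v) \<Rightarrow> ('a \<Rightarrow> 'v) \<Rightarrow> ('a list \<times> 'a list) set \<Rightarrow> 'a \<Rightarrow> 'a \<Rightarrow> 'a" where
  "rharp A s t R a b = (THE c. c \<in> out_arrows A s (s a) \<and> b = star' A s t R a c)"

definition lharp :: "'a set \<Rightarrow> ('a \<Rightarrow> 'v) \<Rightarrow> ('a \<Rightarrow> 'v) \<Rightarrow> ('a list \<times> 'a list) set \<Rightarrow> 'a \<Rightarrow> 'a \<Rightarrow> 'a" where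
  "lharp A s t R a b = star' A s t R (rharp A s t R a b) a"

definition sigma :: "'a set \<Rightarrow> ('a \<Rightarrow> 'v) \<Rightarrow> ('a \<Rightarrow> 'v) \<Rightarrow> ('a list \<times> 'a list) set \<Rightarrow> 'a \<times> 'a \<Rightarrow> 'a \<times> 'a" where
  "sigma A s t R p = (rharp A s t R (fst p) (snd p), lharp A s t R (fst p) (snd p))"

definition composable :: "'a set \<Rightarrow> ('a \<Rightarrow> 'v) \<Rightarrow> ('a \<Rightarrow> 'v) \<Rightarrow> 'a \<times> 'a \<Rightarrow> bool" where
  "composable A s t p \<longleftrightarrow> fst p \<in> A \<and> snd p \<in> A \<and> t (fst p) = s (snd p)"

definition sig12 :: "('a \<times> 'a \<Rightarrow> 'a \<times> 'a) \<Rightarrow> 'a \<times> 'a \<times> 'a \<Rightarrow> 'a \<times> 'a \<times> 'a" where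
  "sig12 \<sigma> x = (fst (\<sigma> (fst x, fst (snd x))), snd (\<sigma> (fst x, fst (snd x))), snd (snd x))"

definition sig23 :: "('a \<times> 'a \<Rightarrow> 'a \<times> 'a) \<Rightarrow> 'a \<times> 'a \<times> 'a \<Rightarrow> 'a \<times> 'a \<times> 'a" where
  "sig23 \<sigma> x = (fst x, fst (\<sigma> (snd x)), snd (\<sigma> (snd x)))"

definition qyb_map :: "'a set \<Rightarrow> ('a \<Rightarrow> 'v) \<Rightarrow> ('a \<Rightarrow> 'v) \<Rightarrow> ('a \<times> 'a \<Rightarrow> 'a \<times> 'a) \<Rightarrow> bool" where
  "qyb_map A s t \<sigma> \<longleftrightarrow>
     (\<forall>p. composable A s t p \<longrightarrow> composable A s t (\<sigma> p) \<and>
          s (fst (\<sigma> p)) = s (fst p) \<and> t (snd (\<sigma> p)) = t (snd p)) \<and>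
     (\<forall>x y z. x \<in> A \<longrightarrow> y \<in> A \<longrightarrow> z \<in> A \<longrightarrow> t x = s y \<longrightarrow> t y = s z \<longrightarrow>
          sig12 \<sigma> (sig23 \<sigma> (sig12 \<sigma> (x, y, z))) = sig23 \<sigma> (sig12 \<sigma> (sig23 \<sigma> (x, y, z))))"

definition involutive_on :: "'a set \<Rightarrow> ('a \<Rightarrow> 'v) \<Rightarrow> ('a \<Rightarrow> 'v) \<Rightarrow> ('a \<times> 'a \<Rightarrow> 'a \<times> 'a) \<Rightarrow> bool" where
  "involutive_on A s t \<sigma> \<longleftrightarrow> (\<forall>p. composable A s t p \<longrightarrow> \<sigma> (\<sigma> p) = p)"

definition nondegenerate :: "'a set \<Rightarrow> ('a \<Rightarrow> 'v) \<Rightarrow> ('a \<Rightarrow> 'v) \<Rightarrow> ('a \<times> 'a \<Rightarrow> 'a \<times> 'a) \<Rightarrow> bool" where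
  "nondegenerate A s t \<sigma> \<longleftrightarrow>
     (\<forall>x \<in> A. bij_betw (\<lambda>y. fst (\<sigma> (x, y))) (out_arrows A s (t x)) (out_arrows A s (s x))) \<and>
     (\<forall>y \<in> A. bij_betw (\<lambda>x. snd (\<sigma> (x, y))) (in_arrows A t (s y)) (in_arrows A t (t y)))"

definition structure_rels :: "'a set \<Rightarrow> ('a \<Rightarrow> 'v) \<Rightarrow> ('a \<Rightarrow> 'v) \<Rightarrow> ('a \<times> 'a \<Rightarrow> 'a \<times> 'a)
    \<Rightarrow> ('a list \<times> 'a list) set" where
  "structure_rels A s t \<sigma> =
     {([x, y], [fst (\<sigma> (x, y)), snd (\<sigma> (x, y))]) | x y. composable A s t (x, y)}"

end

theory Submission
  imports Defs
begin

locale six =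
  fixes A :: "'a set" and s t :: "'a \<Rightarrow> 'v" and R :: "('a list \<times> 'a list) set"
  assumes R_paths: "relations_on_paths A s t R"
    and i_form: "\<forall>(p, q) \<in> R. \<exists>a v b w. a \<in> A \<and> v \<in> A \<and> b \<in> A \<and> w \<in> A \<and> p = [a, v] \<and> q = [b, w]"
    and i_unique: "\<forall>p r1 r2. r1 \<in> R \<longrightarrow> r2 \<in> R \<longrightarrow> p \<in> {fst r1, snd r1} \<longrightarrow> p \<in> {fst r2, snd r2}
                     \<longrightarrow> r1 = r2 \<or> r1 = prod.swap r2"
    and ii: "\<forall>a \<in> A. \<forall>b \<in> A. a \<noteq> b \<and> s a = s b \<longrightarrow> (\<exists>!vw. rel R [a, fst vw] [b, snd vw])"
    and ii': "\<forall>a \<in> A. \<forall>b \<in> A. a \<noteq> b \<and> t a = t b \<longrightarrow> (\<exists>!vw. rel R [fst vw, a] [snd vw, b])"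
    and iii: "\<forall>a \<in> A. \<exists>!z. zpred A s t R a z"
    and iii': "\<forall>a \<in> A. \<exists>!z. zpred' A s t R a z"
    and v: "\<forall>a \<in> A. \<forall>b \<in> A. \<forall>c \<in> A. a \<noteq> b \<and> b \<noteq> c \<and> a \<noteq> c \<and> s a = s b \<and> s a = s c \<longrightarrow>
              star R (star R a b) (star R a c) = star R (star R b a) (star R b c)"
begin

abbreviation "st \<equiv> star' A s t R"
abbreviation "z \<equiv> zeta A s t R"
abbreviation "zr a \<equiv> (THE z. zpred' A s t R a z)"

lemma R_shape:
  assumes "(p, q) \<in> R"
  shows "\<exists>a v b w. p = [a, v] \<and> q = [b, w] \<and> a \<in> A \<and> v \<in> A \<and> b \<in> A \<and> w \<in> A \<and>
     t a = s v \<and> t b = s w \<and> s a = s b \<and> t v = t w"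
proof -
  obtain a v b w where *: "a \<in> A" "v \<in> A" "b \<in> A" "w \<in> A" "p = [a, v]" "q = [b, w]"
    using i_form assms by fastforce
  have "is_path A s t p" "is_path A s t q" "s (hd p) = s (hd q)" "t (last p) = t (last q)"
    using R_paths assms unfolding relations_on_paths_def by auto
  then have "t a = s v" "t b = s w" "s a = s b" "t v = t w"
    using * unfolding is_path_def by (auto dest!: spec[of _ 0])
  then show ?thesis using * by blast
qed

lemma rel_facts:
  assumes "rel R [a, v] [b, w]"
  shows "a \<in> A \<and> v \<in> A \<and> b \<in> A \<and> w \<in> A \<and> t a = s v \<and> t b = s w \<and> s a = s b \<and> t v = t w"
  using assms unfolding rel_def
  by (auto dest!: R_shape)

lemma rel_sym: "rel R p q = rel R q p"
  unfolding rel_def by auto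

lemma rel_unique:
  assumes "rel R p q" "rel R p q'"
  shows "q = q'"
proof -
  obtain r1 where r1: "r1 \<in> R" "r1 = (p, q) \<or> r1 = (q, p)" using assms(1) unfolding rel_def by auto
  obtain r2 where r2: "r2 \<in> R" "r2 = (p, q') \<or> r2 = (q', p)" using assms(2) unfolding rel_def by auto
  have "r1 = r2 \<or> r1 = prod.swap r2" using i_unique[rule_format, of r1 r2 p] r1 r2 by auto
  then show ?thesis using r1 r2 by auto
qed

lemma zpred_z:
  assumes "a \<in> A" shows "zpred A s t R a (z a)"
  using theI'[OF iii[rule_format, OF assms]] unfolding zeta_def by simp

lemma zpred_zr:
  assumes "a \<in> A" shows "zpred' A s t R a (zr a)"
  using theI'[OF iii'[rule_format, OF assms]] by simp

lemma z_in: "a \<in> A \<Longrightarrow> z a \<in> A \<and> s (z a) = t a"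
  using zpred_z unfolding zpred_def by blast

lemma zr_in: "a \<in> A \<Longrightarrow> zr a \<in> A \<and> t (zr a) = s a"
  using zpred_zr unfolding zpred'_def by blast

lemma z_triv: "a \<in> A \<Longrightarrow> rel R [a, z a] [b, w] \<Longrightarrow> b = a \<and> w = z a"
  using zpred_z unfolding zpred_def by blast

lemma zr_triv: "a \<in> A \<Longrightarrow> rel R [zr a, a] [w, b] \<Longrightarrow> b = a \<and> w = zr a"
  using zpred_zr unfolding zpred'_def by blast

lemma z_nontriv: "a \<in> A \<Longrightarrow> v \<in> A \<Longrightarrow> s v = t a \<Longrightarrow> v \<noteq> z a \<Longrightarrow>
   \<exists>b \<in> A. s b = s a \<and> b \<noteq> a \<and> (\<exists>w \<in> A. rel R [a, v] [b, w])"
  using zpred_z unfolding zpred_def by blast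

lemma zr_nontriv: "a \<in> A \<Longrightarrow> v \<in> A \<Longrightarrow> t v = s a \<Longrightarrow> v \<noteq> zr a \<Longrightarrow>
   \<exists>b \<in> A. t b = t a \<and> b \<noteq> a \<and> (\<exists>w \<in> A. rel R [v, a] [w, b])"
  using zpred_zr unfolding zpred'_def by blast

lemma first_eq: assumes "rel R [a, v] [a, w]" shows "v = w"
proof -
  have a: "a \<in> A" "v \<in> A" "s v = t a" using rel_facts[OF assms] by auto
  show ?thesis
  proof (cases "v = z a")
    case True then show ?thesis using z_triv[OF a(1)] assms by auto
  next
    case False
    then obtain b w' where "b \<noteq> a" "rel R [a, v] [b, w']" using z_nontriv[OF a] by auto
    then show ?thesis using rel_unique[OF assms] by auto
  qed
qed

lemma last_eq: assumes "rel R [v, a] [w, a]" shows "v = w"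
proof -
  have a: "a \<in> A" "v \<in> A" "t v = s a" using rel_facts[OF assms] by auto
  show ?thesis
  proof (cases "v = zr a")
    case True then show ?thesis using zr_triv[OF a(1)] assms by auto
  next
    case False
    then obtain b w' where "b \<noteq> a" "rel R [v, a] [w', b]" using zr_nontriv[OF a] by auto
    then show ?thesis using rel_unique[OF assms] by auto
  qed
qed

lemma star_rel:
  assumes "a \<in> A" "b \<in> A" "a \<noteq> b" "s a = s b"
  shows "rel R [a, star R a b] [b, star R b a]"
proof -
  have u1: "\<exists>!vw. rel R [a, fst vw] [b, snd vw]" using ii assms by auto
  have u2: "\<exists>!vw. rel R [b, fst vw] [a, snd vw]" using ii assms by auto
  define p where "p = (THE vw. rel R [a, fst vw] [b, snd vw])"
  have p: "rel R [a, fst p] [b, snd p]" using theI'[OF u1] p_def by simp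
  have "(THE vw. rel R [b, fst vw] [a, snd vw]) = (snd p, fst p)"
    using p u2 by (intro the1_equality) (auto simp: rel_sym)
  then show ?thesis using p unfolding star_def p_def by simp
qed

lemma rel_star:
  assumes "rel R [a, v] [b, w]" "a \<noteq> b"
  shows "v = star R a b \<and> w = star R b a"
proof -
  have f: "a \<in> A" "b \<in> A" "s a = s b" using rel_facts[OF assms(1)] by auto
  have u1: "\<exists>!vw. rel R [a, fst vw] [b, snd vw]" using ii f assms(2) by auto
  have "(v, w) = (star R a b, star R b a)"
    using u1 assms(1) star_rel[OF f(1,2) assms(2) f(3)] by (metis fst_conv snd_conv)
  then show ?thesis by simp
qed

lemma star_in:
  assumes "a \<in> A" "b \<in> A" "a \<noteq> b" "s a = s b"
  shows "star R a b \<in> A \<and> s (star R a b) = t a"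
  using rel_facts[OF star_rel[OF assms]] by auto

lemma star_ne_z:
  assumes "a \<in> A" "b \<in> A" "a \<noteq> b" "s a = s b"
  shows "star R a b \<noteq> z a"
  using z_triv[OF assms(1)] star_rel[OF assms] assms(3) by metis

lemma star_inj:
  assumes "a \<in> A" "b \<in> A" "c \<in> A" "a \<noteq> b" "a \<noteq> c" "s a = s b" "s a = s c"
    "star R a b = star R a c"
  shows "b = c"
  using rel_unique[OF star_rel[OF assms(1,2,4,6)]] star_rel[OF assms(1,3,5,7)] assms(8) by auto

lemma st_in:
  assumes "a \<in> A" "b \<in> A" "s b = s a"
  shows "st a b \<in> A \<and> s (st a b) = t a"
  using star_in[of a b] z_in[of a] assms unfolding star'_def by auto

lemma st_inj:
  assumes "a \<in> A" "b \<in> A" "s b = s a" "c \<in> A" "s c = s a" "st a b = st a c"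
  shows "b = c"
proof (cases "b = a")
  case True
  show ?thesis
  proof (rule ccontr)
    assume "b \<noteq> c"
    then have "c \<noteq> a" using True by simp
    then have "st a c = star R a c" "st a b = z a" using True unfolding star'_def by auto
    then show False using star_ne_z[of a c] assms \<open>c \<noteq> a\<close> by metis
  qed
next
  case False
  show ?thesis
  proof (rule ccontr)
    assume "b \<noteq> c"
    show False
    proof (cases "c = a")
      case True
      then have "st a c = z a" "st a b = star R a b" using False unfolding star'_def by auto
      then show False using star_ne_z[of a b] assms False by metis
    next
      case c: False
      then have "st a c = star R a c" "st a b = star R a b" using False unfolding star'_def by auto
      then show False using star_inj[of a b c] assms False c \<open>b \<noteq> c\<close> by metis
    qed
  qed
qed

lemma st_surj:
  assumes "a \<in> A" "v \<in> A" "s v = t a"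
  shows "\<exists>b. b \<in> A \<and> s b = s a \<and> st a b = v"
proof (cases "v = z a")
  case True then show ?thesis using assms unfolding star'_def by auto
next
  case False
  then obtain b w where b: "b \<in> A" "s b = s a" "b \<noteq> a" "rel R [a, v] [b, w]"
    using z_nontriv[OF assms] by auto
  then show ?thesis using rel_star[OF b(4)] unfolding star'_def by auto
qed


lemma st_self: "st a a = z a" unfolding star'_def by simp
lemma st_ne: "a \<noteq> b \<Longrightarrow> st a b = star R a b" unfolding star'_def by simp

lemma rharp_st:
  assumes "a \<in> A" "c \<in> A" "s c = s a"
  shows "rharp A s t R a (st a c) = c"
  unfolding rharp_def
proof (rule the_equality)
  show "c \<in> out_arrows A s (s a) \<and> st a c = st a c" using assms unfolding out_arrows_def by auto
next
  fix c' assume "c' \<in> out_arrows A s (s a) \<and> st a c = st a c'"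
  then show "c' = c" using st_inj[of a c c'] assms unfolding out_arrows_def by auto
qed

lemma rharp_ex:
  assumes "a \<in> A" "y \<in> A" "s y = t a"
  obtains c where "c \<in> A" "s c = s a" "y = st a c"
  using st_surj[OF assms] by metis

lemma sigma_st:
  assumes "a \<in> A" "c \<in> A" "s c = s a"
  shows "sigma A s t R (a, st a c) = (c, st c a)"
  unfolding sigma_def lharp_def using rharp_st[OF assms] by simp

lemma t_st_sym:
  assumes "a \<in> A" "c \<in> A" "s c = s a"
  shows "t (st a c) = t (st c a)"
proof (cases "a = c")
  case False
  then show ?thesis using rel_facts[OF star_rel[OF assms(1,2) False]] assms st_ne[OF False]
    st_ne[of c a] False by auto
qed simp

lemma zr_of_z:
  assumes x: "x \<in> A" shows "zr (z x) = x"
proof (rule ccontr)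
  let ?y = "z x"
  have y: "?y \<in> A" "s ?y = t x" using z_in[OF x] by auto
  assume "zr ?y \<noteq> x"
  then obtain b w where "b \<noteq> ?y" "rel R [x, ?y] [w, b]"
    using zr_nontriv[OF y(1) x] y by metis
  then show False using z_triv[OF x] by metis
qed

lemma z_of_zr:
  assumes y: "y \<in> A" shows "z (zr y) = y"
proof (rule ccontr)
  let ?x = "zr y"
  have x: "?x \<in> A" "t ?x = s y" using zr_in[OF y] by auto
  assume "z ?x \<noteq> y"
  then obtain b w where "b \<noteq> ?x" "rel R [?x, y] [b, w]"
    using z_nontriv[OF x(1) y] x by metis
  then show False using zr_triv[OF y] by metis
qed

lemma degen:
  assumes a: "a \<in> A" and b: "b \<in> A" and ab: "a \<noteq> b" and sab: "s a = s b"
  shows "st (star R a b) (z a) = z (star R b a)"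
proof -
  define u where "u = star R a b"
  define u' where "u' = star R b a"
  have r: "rel R [a, u] [b, u']" using star_rel[OF a b ab sab] u_def u'_def by simp
  note rf = rel_facts[OF r]
  have uu': "u \<noteq> u'" using r last_eq ab by metis
  define w where "w = z u'"
  have w: "w \<in> A" "s w = t u" using z_in[of u'] rf w_def by auto
  have wzu: "w \<noteq> z u" using zr_of_z[of u] zr_of_z[of u'] rf uu' w_def by metis
  obtain c w' where c: "c \<in> A" "s c = s u" "c \<noteq> u" "rel R [u, w] [c, w']"
    using z_nontriv[OF _ w wzu] rf by metis
  have wc: "w = star R u c" using rel_star[OF c(4)] c(3) by metis
  have zau: "z a \<noteq> u" using star_ne_z[OF a b ab sab] u_def by metis
  have cz: "c = z a"
  proof (rule ccontr)
    assume "c \<noteq> z a"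
    then obtain d w'' where d: "d \<in> A" "s d = s a" "d \<noteq> a" "rel R [a, c] [d, w'']"
      using z_nontriv[OF a c(1)] c rf by metis
    have cd: "c = star R a d" using rel_star[OF d(4)] d(3) by metis
    have db: "d \<noteq> b" using cd c(3) u_def by metis
    have vv: "star R u c = star R u' (star R b d)"
      using v[rule_format, of a b d] a b d ab db sab u_def u'_def cd by metis
    have bd_ne: "star R b d \<noteq> u'" using star_inj[of b d a] b d a ab db sab u'_def by metis
    have bd_in: "star R b d \<in> A \<and> s (star R b d) = t b" using star_in[of b d] b d db sab by metis
    have "star R u' (star R b d) \<noteq> z u'"
      using star_ne_z[of u' "star R b d"] rf bd_ne bd_in by metis
    then show False using vv wc w_def by simp
  qed
  have "st u (z a) = star R u (z a)" using st_ne zau by metis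
  then show ?thesis using wc cz w_def u_def u'_def by simp
qed

lemma cycle:
  assumes a: "a \<in> A" and b: "b \<in> A" and c: "c \<in> A" and sb: "s b = s a" and sc: "s c = s a"
  shows "st (st a b) (st a c) = st (st b a) (st b c)"
proof (cases "a = b")
  case True then show ?thesis by simp
next
  case ab: False
  show ?thesis
  proof (cases "c = a")
    case True
    then show ?thesis using degen[OF a b ab] sb ab st_ne[OF ab] st_ne[of b a] st_self by simp
  next
    case ca: False
    show ?thesis
    proof (cases "c = b")
      case True
      have "st (star R b a) (z b) = z (star R a b)" using degen[OF b a] ab sb by metis
      then show ?thesis using True ab st_ne[OF ab] st_ne[of b a] st_self by simp
    next
      case cb: False
      have n1: "star R a b \<noteq> star R a c" using star_inj[of a b c] a b c ab ca cb sb sc by metis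
      have n2: "star R b a \<noteq> star R b c" using star_inj[of b a c] a b c ab ca cb sb sc by metis
      have "star R (star R a b) (star R a c) = star R (star R b a) (star R b c)"
        using v[rule_format, of a b c] a b c ab ca cb sb sc by metis
      then show ?thesis using n1 n2 st_ne ab ca cb by (metis st_ne)
    qed
  qed
qed


abbreviation "sg \<equiv> sigma A s t R"

lemma comp_ex:
  assumes "x \<in> A" "y \<in> A" "t x = s y"
  obtains c where "c \<in> A" "s c = s x" "y = st x c" "sg (x, y) = (c, st c x)"
proof -
  obtain c where c: "c \<in> A" "s c = s x" "y = st x c" using rharp_ex[of x y] assms by metis
  then show ?thesis using that sigma_st[OF assms(1) c(1,2)] by simp
qed

lemma bij_st:
  assumes a: "a \<in> A"
  shows "bij_betw (st a) (out_arrows A s (s a)) (out_arrows A s (t a))"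
  unfolding bij_betw_def
proof
  show "inj_on (st a) (out_arrows A s (s a))"
    using st_inj[OF a] unfolding inj_on_def out_arrows_def by auto
  show "st a ` out_arrows A s (s a) = out_arrows A s (t a)"
  proof
    show "st a ` out_arrows A s (s a) \<subseteq> out_arrows A s (t a)"
      using st_in[OF a] unfolding out_arrows_def by auto
    show "out_arrows A s (t a) \<subseteq> st a ` out_arrows A s (s a)"
    proof
      fix y assume "y \<in> out_arrows A s (t a)"
      then obtain c where "c \<in> A" "s c = s a" "y = st a c"
        using rharp_ex[OF a] unfolding out_arrows_def by auto
      then show "y \<in> st a ` out_arrows A s (s a)" unfolding out_arrows_def by auto
    qed
  qed
qed

lemma qyb1:
  assumes "composable A s t p"
  shows "composable A s t (sg p) \<and> s (fst (sg p)) = s (fst p) \<and> t (snd (sg p)) = t (snd p)"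
proof -
  obtain x y where p: "p = (x, y)" "x \<in> A" "y \<in> A" "t x = s y"
    using assms unfolding composable_def by (cases p) auto
  obtain c where c: "c \<in> A" "s c = s x" "y = st x c" "sg (x, y) = (c, st c x)"
    using comp_ex[OF p(2-4)] by metis
  have "st c x \<in> A" "s (st c x) = t c" using st_in[of c x] c p by auto
  moreover have "t (st c x) = t y" using t_st_sym[of x c] c p by simp
  ultimately show ?thesis using p c unfolding composable_def by simp
qed

definition W where "W x c e = (x, st x c, st (st x c) (st x e))"

lemma sig12_W:
  assumes "x \<in> A" "c \<in> A" "e \<in> A" "s c = s x" "s e = s x"
  shows "sig12 sg (W x c e) = W c x e"
  using assms sigma_st[of x c] cycle[of x c e] unfolding W_def sig12_def by simp

lemma sig23_W:
  assumes "x \<in> A" "c \<in> A" "e \<in> A" "s c = s x" "s e = s x"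
  shows "sig23 sg (W x c e) = W x e c"
proof -
  have u: "st x c \<in> A" "s (st x c) = t x" using st_in assms by auto
  have w: "st x e \<in> A" "s (st x e) = t x" using st_in assms by auto
  show ?thesis using sigma_st[of "st x c" "st x e"] u w unfolding W_def sig23_def by simp
qed

lemma ybe:
  assumes "x \<in> A" "y \<in> A" "zz \<in> A" "t x = s y" "t y = s zz"
  shows "sig12 sg (sig23 sg (sig12 sg (x, y, zz))) = sig23 sg (sig12 sg (sig23 sg (x, y, zz)))"
proof -
  obtain c where c: "c \<in> A" "s c = s x" "y = st x c" using rharp_ex[of x y] assms by metis
  obtain d where d: "d \<in> A" "s d = s y" "zz = st y d" using rharp_ex[of y zz] assms by metis
  obtain e where e: "e \<in> A" "s e = s x" "d = st x e" using rharp_ex[of x d] assms d by metis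
  have W: "(x, y, zz) = W x c e" unfolding W_def using c d e by simp
  have "sig12 sg (sig23 sg (sig12 sg (W x c e))) = W e c x"
    using sig12_W sig23_W assms c e by simp
  moreover have "sig23 sg (sig12 sg (sig23 sg (W x c e))) = W e c x"
    using sig12_W sig23_W assms c e by simp
  ultimately show ?thesis using W by simp
qed

lemma invol:
  assumes "composable A s t p" shows "sg (sg p) = p"
proof -
  obtain x y where p: "p = (x, y)" "x \<in> A" "y \<in> A" "t x = s y"
    using assms unfolding composable_def by (cases p) auto
  obtain c where c: "c \<in> A" "s c = s x" "y = st x c" "sg (x, y) = (c, st c x)"
    using comp_ex[OF p(2-4)] by metis
  show ?thesis using sigma_st[of c x] c p by simp
qed

lemma sig_cases:
  assumes "x \<in> A" "y \<in> A" "t x = s y"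
  shows "(y = z x \<and> sg (x, y) = (x, y)) \<or>
         (y \<noteq> z x \<and> fst (sg (x, y)) \<noteq> x \<and> rel R [x, y] [fst (sg (x, y)), snd (sg (x, y))])"
proof -
  obtain c where c: "c \<in> A" "s c = s x" "y = st x c" "sg (x, y) = (c, st c x)"
    using comp_ex[OF assms] by metis
  show ?thesis
  proof (cases "c = x")
    case True then show ?thesis using c st_self by simp
  next
    case False
    then show ?thesis using star_rel[of x c] c assms st_ne[OF False] st_ne[of x c] star_ne_z[of x c] by auto
  qed
qed

lemma nondeg2:
  assumes y: "y \<in> A"
  shows "bij_betw (\<lambda>x. snd (sg (x, y))) (in_arrows A t (s y)) (in_arrows A t (t y))"
  unfolding bij_betw_def
proof (intro conjI)
  show "inj_on (\<lambda>x. snd (sg (x, y))) (in_arrows A t (s y))"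
  proof (rule inj_onI)
    fix x1 x2 assume x1: "x1 \<in> in_arrows A t (s y)" and x2: "x2 \<in> in_arrows A t (s y)"
      and eq: "snd (sg (x1, y)) = snd (sg (x2, y))"
    have x1': "x1 \<in> A" "t x1 = s y" using x1 unfolding in_arrows_def by auto
    have x2': "x2 \<in> A" "t x2 = s y" using x2 unfolding in_arrows_def by auto
    note C1 = sig_cases[OF x1' (1) y x1'(2)] and C2 = sig_cases[OF x2'(1) y x2'(2)]
    show "x1 = x2"
    proof (cases "y = z x1")
      case T1: True
      show ?thesis
      proof (cases "y = z x2")
        case True then show ?thesis using T1 zr_of_z x1' x2' by metis
      next
        case False
        then have "fst (sg (x2, y)) \<noteq> x2" "rel R [x2, y] [fst (sg (x2, y)), y]"
          using C2 C1 T1 eq by (auto simp del: sigma_def)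
        then show ?thesis using last_eq by metis
      qed
    next
      case F1: False
      then have r1: "fst (sg (x1, y)) \<noteq> x1" "rel R [x1, y] [fst (sg (x1, y)), snd (sg (x1, y))]"
        using C1 by auto
      show ?thesis
      proof (cases "y = z x2")
        case True
        then have "snd (sg (x1, y)) = y" using C2 eq by auto
        then show ?thesis using r1 last_eq by metis
      next
        case False
        then have r2: "fst (sg (x2, y)) \<noteq> x2" "rel R [x2, y] [fst (sg (x2, y)), snd (sg (x1, y))]"
          using C2 eq by auto
        let ?w = "snd (sg (x1, y))"
        have wy: "?w \<noteq> y" using r1 last_eq by metis
        have wf: "?w \<in> A" "t ?w = t y" using rel_facts[OF r1(2)] by auto
        have "\<exists>!vw. rel R [fst vw, y] [snd vw, ?w]" using ii' y wf wy by metis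
        then have "(x1, fst (sg (x1, y))) = (x2, fst (sg (x2, y)))"
          using r1(2) r2(2) by (metis fst_conv snd_conv)
        then show ?thesis by simp
      qed
    qed
  qed
next
  show "(\<lambda>x. snd (sg (x, y))) ` in_arrows A t (s y) = in_arrows A t (t y)"
  proof
    show "(\<lambda>x. snd (sg (x, y))) ` in_arrows A t (s y) \<subseteq> in_arrows A t (t y)"
    proof
      fix w assume "w \<in> (\<lambda>x. snd (sg (x, y))) ` in_arrows A t (s y)"
      then obtain x where x: "x \<in> A" "t x = s y" "w = snd (sg (x, y))"
        unfolding in_arrows_def by auto
      then show "w \<in> in_arrows A t (t y)" using qyb1[of "(x, y)"] y
        unfolding composable_def in_arrows_def by auto
    qed
    show "in_arrows A t (t y) \<subseteq> (\<lambda>x. snd (sg (x, y))) ` in_arrows A t (s y)"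
    proof
      fix w assume "w \<in> in_arrows A t (t y)"
      then have w: "w \<in> A" "t w = t y" unfolding in_arrows_def by auto
      show "w \<in> (\<lambda>x. snd (sg (x, y))) ` in_arrows A t (s y)"
      proof (cases "w = y")
        case True
        let ?x = "zr y"
        have x: "?x \<in> A" "t ?x = s y" using zr_in[OF y] by auto
        have "y = st ?x ?x" using z_of_zr[OF y] st_self by simp
        then have "sg (?x, y) = (?x, y)" using sigma_st[of ?x ?x] x by simp
        then show ?thesis using True x unfolding in_arrows_def by force
      next
        case False
        then obtain vw where r: "rel R [fst vw, y] [snd vw, w]" using ii' y w by metis
        have ne: "fst vw \<noteq> snd vw" using first_eq r False by metis
        have eqs: "y = star R (fst vw) (snd vw)" "w = star R (snd vw) (fst vw)"
          using rel_star[OF r ne] by auto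
        have f: "fst vw \<in> A" "snd vw \<in> A" "t (fst vw) = s y" "s (snd vw) = s (fst vw)"
          using rel_facts[OF r] by auto
        have "sg (fst vw, y) = (snd vw, w)"
          using sigma_st[of "fst vw" "snd vw"] f eqs st_ne ne by metis
        then show ?thesis using f unfolding in_arrows_def by force
      qed
    qed
  qed
qed

lemma nondeg1:
  assumes x: "x \<in> A"
  shows "bij_betw (\<lambda>y. fst (sg (x, y))) (out_arrows A s (t x)) (out_arrows A s (s x))"
proof (rule bij_betw_byWitness[where f' = "st x"])
  show "\<forall>y \<in> out_arrows A s (t x). st x (fst (sg (x, y))) = y"
  proof
    fix y assume "y \<in> out_arrows A s (t x)"
    then obtain c where "c \<in> A" "s c = s x" "y = st x c" "sg (x, y) = (c, st c x)"
      using comp_ex[of x y] x unfolding out_arrows_def by auto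
    then show "st x (fst (sg (x, y))) = y" by simp
  qed
  show "\<forall>c \<in> out_arrows A s (s x). fst (sg (x, st x c)) = c"
    using sigma_st[OF x] unfolding out_arrows_def by auto
  show "(\<lambda>y. fst (sg (x, y))) ` out_arrows A s (t x) \<subseteq> out_arrows A s (s x)"
    using qyb1 x unfolding out_arrows_def composable_def by force
  show "st x ` out_arrows A s (s x) \<subseteq> out_arrows A s (t x)"
    using st_in[OF x] unfolding out_arrows_def by auto
qed

lemma pcong_mono:
  assumes "pcong A s t X p q" "\<And>p q. (p, q) \<in> X \<Longrightarrow> pcong A s t Y p q"
  shows "pcong A s t Y p q"
  using assms(1)
proof (induction rule: pcong.induct)
  case (base p q) then show ?case using assms(2) by simp
next
  case (refl p) then show ?case by (rule pcong.refl)
next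
  case (sym p q) then show ?case by (blast intro: pcong.sym)
next
  case (trans p q r) then show ?case by (blast intro: pcong.trans)
next
  case (ctxt p q u v) then show ?case by (blast intro: pcong.ctxt)
qed

lemma struct_to_R:
  assumes "(p, q) \<in> structure_rels A s t sg" shows "pcong A s t R p q"
proof -
  obtain x y where p: "p = [x, y]" "q = [fst (sg (x, y)), snd (sg (x, y))]" "x \<in> A" "y \<in> A" "t x = s y"
    using assms unfolding structure_rels_def composable_def by auto
  show ?thesis
  proof (cases "y = z x \<and> sg (x, y) = (x, y)")
    case True
    have "is_path A s t [x, y]" using p unfolding is_path_def by (auto simp: less_Suc_eq)
    moreover from True have "sg (x, y) = (x, y)" by blast
    then have "q = p" using p(1,2) by simp
    ultimately show ?thesis using p(1) pcong.refl by metis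
  next
    case False
    then have "rel R p q" using sig_cases[OF p(3-5)] p by auto
    then show ?thesis unfolding rel_def by (auto intro: pcong.base pcong.sym)
  qed
qed

lemma R_to_struct:
  assumes "(p, q) \<in> R" shows "pcong A s t (structure_rels A s t sg) p q"
proof -
  obtain a v b w where r: "p = [a, v]" "q = [b, w]" "a \<in> A" "v \<in> A" "b \<in> A" "w \<in> A"
     "t a = s v" "t b = s w" "s a = s b" "t v = t w"
    using R_shape[OF assms] by blast
  have rr: "rel R [a, v] [b, w]" using assms r unfolding rel_def by simp
  show ?thesis
  proof (cases "a = b")
    case True
    then have "p = q" using first_eq rr r by metis
    moreover have "is_path A s t p" using R_paths assms unfolding relations_on_paths_def by auto
    ultimately show ?thesis using pcong.refl by simp
  next
    case False
    have eqs: "v = st a b" "w = st b a" using rel_star[OF rr False] st_ne False by metis+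
    have "sg (a, v) = (b, w)" using sigma_st[of a b] r eqs by simp
    then have "(p, q) \<in> structure_rels A s t sg"
      unfolding structure_rels_def composable_def using r by force
    then show ?thesis by (rule pcong.base)
  qed
qed

lemma main:
  "(\<forall>a \<in> A. bij_betw (star' A s t R a) (out_arrows A s (s a)) (out_arrows A s (t a)))
    \<and> qyb_map A s t (sigma A s t R)
    \<and> involutive_on A s t (sigma A s t R)
    \<and> nondegenerate A s t (sigma A s t R)
    \<and> pcong A s t (structure_rels A s t (sigma A s t R)) = pcong A s t R"
proof (intro conjI)
  show "\<forall>a \<in> A. bij_betw (star' A s t R a) (out_arrows A s (s a)) (out_arrows A s (t a))"
    using bij_st by blast
  show "qyb_map A s t sg" unfolding qyb_map_def using qyb1 ybe by blast
  show "involutive_on A s t sg" unfolding involutive_on_def using invol by blast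
  show "nondegenerate A s t sg" unfolding nondegenerate_def using nondeg1 nondeg2 by blast
  show "pcong A s t (structure_rels A s t sg) = pcong A s t R"
  proof (intro ext iffI)
    fix p q assume "pcong A s t (structure_rels A s t sg) p q"
    then show "pcong A s t R p q" using pcong_mono struct_to_R by blast
  next
    fix p q assume "pcong A s t R p q"
    then show "pcong A s t (structure_rels A s t sg) p q" using pcong_mono R_to_struct by blast
  qed
qed

end

theorem theorem6p3:
  fixes A :: "'a set" and s t :: "'a \<Rightarrow> 'v" and R :: "('a list \<times> 'a list) set"
  assumes R_paths: "relations_on_paths A s t R"
    and i_form: "\<forall>(p, q) \<in> R. \<exists>a v b w. a \<in> A \<and> v \<in> A \<and> b \<in> A \<and> w \<in> A \<and> p = [a, v] \<and> q = [b, w]"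
    and i_unique: "\<forall>p r1 r2. r1 \<in> R \<longrightarrow> r2 \<in> R \<longrightarrow> p \<in> {fst r1, snd r1} \<longrightarrow> p \<in> {fst r2, snd r2}
                     \<longrightarrow> r1 = r2 \<or> r1 = prod.swap r2"
    and ii: "\<forall>a \<in> A. \<forall>b \<in> A. a \<noteq> b \<and> s a = s b \<longrightarrow> (\<exists>!vw. rel R [a, fst vw] [b, snd vw])"
    and ii': "\<forall>a \<in> A. \<forall>b \<in> A. a \<noteq> b \<and> t a = t b \<longrightarrow> (\<exists>!vw. rel R [fst vw, a] [snd vw, b])"
    and iii: "\<forall>a \<in> A. \<exists>!z. zpred A s t R a z"
    and iii': "\<forall>a \<in> A. \<exists>!z. zpred' A s t R a z"
    and v: "\<forall>a \<in> A. \<forall>b \<in> A. \<forall>c \<in> A. a \<noteq> b \<and> b \<noteq> c \<and> a \<noteq> c \<and> s a = s b \<and> s a = s c \<longrightarrow>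
              star R (star R a b) (star R a c) = star R (star R b a) (star R b c)"
  shows "(\<forall>a \<in> A. bij_betw (star' A s t R a) (out_arrows A s (s a)) (out_arrows A s (t a)))
    \<and> qyb_map A s t (sigma A s t R)
    \<and> involutive_on A s t (sigma A s t R)
    \<and> nondegenerate A s t (sigma A s t R)
    \<and> pcong A s t (structure_rels A s t (sigma A s t R)) = pcong A s t R"
  by (rule six.main[OF six.intro[OF assms]])

end
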